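(* Let $\boldsymbol{\mu}=(\mu_1,\dots,\mu_K)^T$, $\boldsymbol{\nu}=(\nu_1,\dots,\nu_K)^T$, $\boldsymbol{\kappa}=(\kappa_1,\dots,\kappa_K)^T\in\mathbb{R}^K$, let $\Delta^K=\{\boldsymbol{\lambda}\in\mathbb{R}^K:\sum_i\lambda_i=1,\ \lambda_i\ge0\}$, and let $$V=\max_{\boldsymbol{\lambda}\in\Delta^K}\left(\boldsymbol{\lambda}^T\boldsymbol{\kappa}-\boldsymbol{\lambda}^T\boldsymbol{\mu}\boldsymbol{\nu}^T\boldsymbol{\lambda}\right).$$ For $1\le i\le j\le K$ define $$q_{ij}(x)=\begin{cases}\dfrac{1}{\nu_j-\nu_i}\Big((x-\nu_i)(x-\nu_j)(\mu_i-\mu_j)+(x-\nu_i)(\kappa_j-\kappa_i-\mu_j\nu_j+\mu_i\nu_i)\Big)+\kappa_i-\mu_i\nu_i, & \mu_i\ne\mu_j\text{ and }\nu_i\ne\nu_j,\\ \kappa_i-\mu_i\nu_i, & \text{otherwise},\end{cases}$$ $$\tilde{\mu}_{ij}=\begin{cases}\left(\left(\dfrac{\kappa_j-\mu_j\nu_j-\kappa_i+\mu_i\nu_i}{2(\mu_j-\mu_i)}+\dfrac{\nu_i+\nu_j}{2}\right)\vee\underline{\nu}_{ij}\right)\wedge\overline{\nu}_{ij}, & \mu_i\ne\mu_j\text{ and }\nu_i\ne\nu_j,\\ \nu_i, & \text{otherwise},\end{cases}$$ with $\underline{\nu}_{ij}=\min\{\nu_i,\nu_j\}$, $\overline{\nu}_{ij}=\max\{\nu_i,\nu_j\}$.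 Then $$V=\max\Big\{\max_{1\le i\le K}\{\kappa_i-\mu_i\nu_i\},\ \max_{1\le i\le j\le K}q_{ij}(\tilde{\mu}_{ij})\Big\}.$$ Moreover, if there exists $i_0$ with $V=\kappa_{i_0}-\mu_{i_0}\nu_{i_0}$, then an optimal $\boldsymbol{\lambda}^*$ is given by $\lambda^*_{i_0}=1$ and $\lambda^*_j=0$ for $j\ne i_0$. Otherwise there exist $1\le i_0<j_0\le K$ with $V=q_{i_0j_0}(\tilde{\mu}_{i_0j_0})$, and an optimal $\boldsymbol{\lambda}^*$ is given by $$\lambda^*_{i_0}=\frac12-\frac{\kappa_{j_0}-\mu_{j_0}\nu_{j_0}-\kappa_{i_0}+\mu_{i_0}\nu_{i_0}}{2(\mu_{j_0}-\mu_{i_0})(\nu_{j_0}-\nu_{i_0})},\quad \lambda^*_{j_0}=1-\lambda^*_{i_0},\quad \lambda^*_j=0\ (j\ne i_0,j_0).$$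
   Context: $\vee$ and $\wedge$ denote max and min of real numbers. *)

theory Defs
  imports Complex_Main
begin

text \<open>Vectors in R^K are represented as functions nat => real, indexed by 1..K.\<close>

definition simplexK :: "nat \<Rightarrow> (nat \<Rightarrow> real) set" where
  "simplexK K = {l. (\<forall>i\<in>{1..K}. 0 \<le> l i) \<and> (\<Sum>i=1..K. l i) = 1}"

definition objK :: "nat \<Rightarrow> (nat \<Rightarrow> real) \<Rightarrow> (nat \<Rightarrow> real) \<Rightarrow> (nat \<Rightarrow> real) \<Rightarrow> (nat \<Rightarrow> real) \<Rightarrow> real" where
  "objK K mu nu kappa l =
     (\<Sum>i=1..K. l i * kappa i) - (\<Sum>i=1..K. \<Sum>j=1..K. l i * (mu i * nu j) * l j)"

definition VK :: "nat \<Rightarrow> (nat \<Rightarrow> real) \<Rightarrow> (nat \<Rightarrow> real) \<Rightarrow> (nat \<Rightarrow> real) \<Rightarrow> real" where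
  "VK K mu nu kappa = Sup (objK K mu nu kappa ` simplexK K)"

definition qfun :: "(nat \<Rightarrow> real) \<Rightarrow> (nat \<Rightarrow> real) \<Rightarrow> (nat \<Rightarrow> real) \<Rightarrow> nat \<Rightarrow> nat \<Rightarrow> real \<Rightarrow> real" where
  "qfun mu nu kappa i j x =
     (if mu i \<noteq> mu j \<and> nu i \<noteq> nu j then
        1 / (nu j - nu i) * ((x - nu i) * (x - nu j) * (mu i - mu j)
          + (x - nu i) * (kappa j - kappa i - mu j * nu j + mu i * nu i)) + kappa i - mu i * nu i
      else kappa i - mu i * nu i)"

definition mutilde :: "(nat \<Rightarrow> real) \<Rightarrow> (nat \<Rightarrow> real) \<Rightarrow> (nat \<Rightarrow> real) \<Rightarrow> nat \<Rightarrow> nat \<Rightarrow> real" where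
  "mutilde mu nu kappa i j =
     (if mu i \<noteq> mu j \<and> nu i \<noteq> nu j then
        min (max ((kappa j - mu j * nu j - kappa i + mu i * nu i) / (2 * (mu j - mu i)) + (nu i + nu j) / 2)
                 (min (nu i) (nu j)))
            (max (nu i) (nu j))
      else nu i)"

end

theory Submission
  imports Defs
begin

definition qr :: "real\<Rightarrow>real\<Rightarrow>real\<Rightarrow>real\<Rightarrow>real\<Rightarrow>real\<Rightarrow>real\<Rightarrow>real" where
 "qr mi mj ni nj ki kj x = (if mi \<noteq> mj \<and> ni \<noteq> nj then
        1 / (nj - ni) * ((x - ni) * (x - nj) * (mi - mj)
          + (x - ni) * (kj - ki - mj * nj + mi * ni)) + ki - mi * ni
      else ki - mi * ni)"
definition gr :: "real\<Rightarrow>real\<Rightarrow>real\<Rightarrow>real\<Rightarrow>real\<Rightarrow>real\<Rightarrow>real\<Rightarrow>real" where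
 "gr mi mj ni nj ki kj t = t*ki + (1-t)*kj - (t*mi+(1-t)*mj)*(t*ni+(1-t)*nj)"

lemma L1: assumes "mi \<noteq> mj" "ni \<noteq> nj"
  shows "qr mi mj ni nj ki kj (t*ni+(1-t)*nj) = gr mi mj ni nj ki kj t"
proof -
  have "nj - ni \<noteq> 0" using assms by simp
  then show ?thesis using assms unfolding qr_def gr_def
    by (simp add: field_simps)
qed

lemma L2: assumes "mi \<noteq> mj" "ni \<noteq> nj"
  shows "qr mi mj ni nj ki kj x = qr mi mj ni nj ki kj ((kj - mj*nj - ki + mi*ni)/(2*(mj-mi)) + (ni+nj)/2)
     + (mi-mj)/(nj-ni) * (x - ((kj - mj*nj - ki + mi*ni)/(2*(mj-mi)) + (ni+nj)/2))^2"
proof -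
  define xs where "xs = (kj - mj*nj - ki + mi*ni)/(2*(mj-mi)) + (ni+nj)/2"
  have nz: "nj - ni \<noteq> 0" "mj - mi \<noteq> 0" using assms by auto
  have eq: "(mi-mj)*(2*xs - ni - nj) + (kj - mj*nj - ki + mi*ni) = 0"
    unfolding xs_def using nz by (simp add: field_simps)
  define P where "P y = (y - ni) * (y - nj) * (mi - mj) + (y - ni) * (kj - ki - mj * nj + mi * ni)" for y
  have q: "qr mi mj ni nj ki kj y = P y / (nj - ni) + (ki - mi*ni)" for y
    using assms unfolding qr_def P_def by simp
  have num: "P x - P xs - (mi-mj)*(x-xs)^2 = (x-xs)*((mi-mj)*(2*xs - ni - nj) + (kj - mj*nj - ki + mi*ni))"
    unfolding P_def by (simp add: algebra_simps power2_eq_square)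
  have "qr mi mj ni nj ki kj x - qr mi mj ni nj ki kj xs - (mi-mj)/(nj-ni)*(x-xs)^2
      = (P x - P xs - (mi-mj)*(x-xs)^2) / (nj-ni)"
    unfolding q by (simp add: diff_divide_distrib times_divide_eq_left[symmetric] del: times_divide_eq_left)
  also have "\<dots> = 0" unfolding num eq by simp
  finally have "qr mi mj ni nj ki kj x - qr mi mj ni nj ki kj xs - (mi-mj)/(nj-ni)*(x-xs)^2 = 0" .
  then show ?thesis unfolding xs_def[symmetric] by simp
qed

lemma L3: "ni \<noteq> nj \<Longrightarrow> qr mi mj ni nj ki kj ni = ki - mi*ni" "mi \<noteq> mj \<Longrightarrow> ni \<noteq> nj \<Longrightarrow> qr mi mj ni nj ki kj nj = kj - mj*nj"
  unfolding qr_def by (auto simp: field_simps)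

lemma L0: "gr mi mj ni nj ki kj t = t * (ki - mi*ni) + (1-t)*(kj-mj*nj) + (mj-mi)*(ni-nj)*t*(t-1)"
  unfolding gr_def by (simp add: algebra_simps)
definition mtr :: "real\<Rightarrow>real\<Rightarrow>real\<Rightarrow>real\<Rightarrow>real\<Rightarrow>real\<Rightarrow>real" where
 "mtr mi mj ni nj ki kj = (if mi \<noteq> mj \<and> ni \<noteq> nj then
        min (max ((kj - mj * nj - ki + mi * ni) / (2 * (mj - mi)) + (ni + nj) / 2)
                 (min ni nj)) (max ni nj)
      else ni)"

lemma clip: fixes x xs lo hi :: real assumes "lo \<le> x" "x \<le> hi"
  shows "(min (max xs lo) hi - xs)^2 \<le> (x - xs)^2"
proof -
  have "\<bar>min (max xs lo) hi - xs\<bar> \<le> \<bar>x - xs\<bar>" using assms by (auto simp: abs_if min_def max_def)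
  then show ?thesis by (simp add: abs_le_square_iff)
qed

lemma oneD: assumes "0 \<le> t" "t \<le> 1"
  shows "gr mi mj ni nj ki kj t \<le> max (max (ki - mi*ni) (kj - mj*nj)) (qr mi mj ni nj ki kj (mtr mi mj ni nj ki kj))"
proof (cases "(mj-mi)*(ni-nj) \<ge> 0")
  case True
  have "(mj-mi)*(ni-nj)*t*(t-1) \<le> 0"
    using True assms by (simp add: mult_nonneg_nonpos)
  moreover have "t * (ki - mi*ni) + (1-t)*(kj-mj*nj) \<le> max (ki - mi*ni) (kj - mj*nj)"
  proof -
    have "t * (ki - mi*ni) \<le> t * max (ki - mi*ni) (kj - mj*nj)" using assms by (simp add: mult_left_mono)
    moreover have "(1-t) * (kj - mj*nj) \<le> (1-t) * max (ki - mi*ni) (kj - mj*nj)" using assms by (simp add: mult_left_mono)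
    ultimately show ?thesis by (simp add: algebra_simps)
  qed
  ultimately show ?thesis unfolding L0 by linarith
next
  case False
  then have nd: "mi \<noteq> mj" "ni \<noteq> nj" by auto
  define xs where "xs = (kj - mj*nj - ki + mi*ni)/(2*(mj-mi)) + (ni+nj)/2"
  define x where "x = t*ni+(1-t)*nj"
  have a: "(mi-mj)/(nj-ni) < 0"
  proof -
    have "(mi-mj)*(nj-ni) < 0" using False by (simp add: algebra_simps)
    then show ?thesis by (simp add: divide_less_0_iff mult_less_0_iff)
  qed
  have lo: "min ni nj \<le> x" and hi: "x \<le> max ni nj"
  proof -
    have "x = nj + t*(ni-nj)" unfolding x_def by (simp add: algebra_simps)
    moreover have "t*(ni-nj) \<le> max 0 (ni-nj)" "min 0 (ni-nj) \<le> t*(ni-nj)"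
      using assms by (auto simp: max_def min_def mult_le_cancel_right1 mult_le_0_iff zero_le_mult_iff
          intro: mult_left_le_one_le mult_nonneg_nonneg)
    ultimately show "min ni nj \<le> x" "x \<le> max ni nj" by auto
  qed
  have mt: "mtr mi mj ni nj ki kj = min (max xs (min ni nj)) (max ni nj)"
    using nd unfolding mtr_def xs_def by simp
  have "gr mi mj ni nj ki kj t = qr mi mj ni nj ki kj x" unfolding x_def using L1 nd by simp
  also have "\<dots> = qr mi mj ni nj ki kj xs + (mi-mj)/(nj-ni) * (x - xs)^2"
    using L2[OF nd, of ki kj x] unfolding xs_def by simp
  also have "\<dots> \<le> qr mi mj ni nj ki kj xs + (mi-mj)/(nj-ni) * (min (max xs (min ni nj)) (max ni nj) - xs)^2"
    using mult_left_mono_neg[OF clip[OF lo hi, of xs], of "(mi-mj)/(nj-ni)"] a by simp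
  also have "\<dots> = qr mi mj ni nj ki kj (mtr mi mj ni nj ki kj)"
    using L2[OF nd, of ki kj "min (max xs (min ni nj)) (max ni nj)"] unfolding mt xs_def by simp
  finally show ?thesis by simp
qed

definition lin :: "nat \<Rightarrow> (nat\<Rightarrow>real) \<Rightarrow> (nat\<Rightarrow>real) \<Rightarrow> real" where
  "lin K c l = (\<Sum>i=1..K. l i * c i)"

lemma objK_lin: "objK K mu nu kappa l = lin K kappa l - lin K mu l * lin K nu l"
  unfolding objK_def lin_def sum_product by (simp add: mult_ac)

lemma lin_add: "lin K c (\<lambda>k. l k + s * d k) = lin K c l + s * lin K c d"
  unfolding lin_def by (simp add: algebra_simps sum.distrib sum_distrib_left)

lemma edge_obj:
  assumes "i \<noteq> j" "i \<in> {1..K}" "j \<in> {1..K}" "0 \<le> t" "t \<le> 1"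
  shows "(\<lambda>k. if k = i then t else if k = j then 1 - t else 0) \<in> simplexK K"
    and "objK K mu nu kappa (\<lambda>k. if k = i then t else if k = j then 1 - t else 0)
         = gr (mu i) (mu j) (nu i) (nu j) (kappa i) (kappa j) t"
proof -
  let ?l = "(\<lambda>k. if k = i then t else if k = j then 1 - t else (0::real))"
  have s: "sum f {1..K} = sum f {i,j}" if "\<forall>k\<in>{1..K}-{i,j}. f k = 0" for f :: "nat \<Rightarrow> real"
    by (rule sum.mono_neutral_right) (use assms that in auto)
  have "(\<Sum>k=1..K. ?l k) = 1" by (subst s) (use assms in auto)
  then show "?l \<in> simplexK K" unfolding simplexK_def using assms by auto
  have L: "lin K c ?l = t * c i + (1-t) * c j" for c unfolding lin_def by (subst s) (use assms in auto)
  show "objK K mu nu kappa ?l = gr (mu i) (mu j) (nu i) (nu j) (kappa i) (kappa j) t"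
    unfolding objK_lin L gr_def by (simp add: algebra_simps)
qed

lemma vertex_obj:
  assumes "i \<in> {1..K}"
  shows "(\<lambda>k. if k = i then 1 else 0) \<in> simplexK K"
    and "objK K mu nu kappa (\<lambda>k. if k = i then 1 else 0) = kappa i - mu i * nu i"
proof -
  let ?l = "(\<lambda>k. if k = i then 1 else (0::real))"
  have "(\<Sum>k=1..K. ?l k) = 1" using assms by simp
  then show "?l \<in> simplexK K" unfolding simplexK_def using assms by auto
  have "lin K c ?l = c i" for c
  proof -
    have "lin K c ?l = (\<Sum>k=1..K. if k = i then c k else 0)" unfolding lin_def by (rule sum.cong) auto
    then show ?thesis using assms by simp
  qed
  then show "objK K mu nu kappa ?l = kappa i - mu i * nu i"
    unfolding objK_lin by simp
qed

lemma reduce: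
  assumes K: "K \<ge> 1"
    and edge: "\<And>l i j. l \<in> simplexK K \<Longrightarrow> i \<in> {1..K} \<Longrightarrow> j \<in> {1..K}
       \<Longrightarrow> (\<forall>k\<in>{1..K}. k \<noteq> i \<and> k \<noteq> j \<longrightarrow> l k = 0) \<Longrightarrow> objK K mu nu kappa l \<le> B"
    and l0: "l0 \<in> simplexK K"
  shows "objK K mu nu kappa l0 \<le> B"
proof -
  have main: "\<forall>S l. S \<subseteq> {1..K} \<longrightarrow> card S = n \<longrightarrow> l \<in> simplexK K \<longrightarrow> (\<forall>k\<in>{1..K}-S. l k = 0)
      \<longrightarrow> objK K mu nu kappa l \<le> B" for n
  proof (induction n rule: less_induct)
    case (less n)
    show ?case
    proof (intro allI impI)
      fix S l assume S: "S \<subseteq> {1..K}" and cS: "card S = n" and l: "l \<in> simplexK K"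
        and z: "\<forall>k\<in>{1..K}-S. l k = 0"
      have fS: "finite S" using S finite_subset by blast
      have lnn: "\<forall>k\<in>{1..K}. 0 \<le> l k" and lsum: "(\<Sum>k=1..K. l k) = 1"
        using l unfolding simplexK_def by auto
      show "objK K mu nu kappa l \<le> B"
      proof (cases "n \<le> 2")
        case True
        obtain i j where ij: "i\<in>{1..K}" "j\<in>{1..K}" "S \<subseteq> {i,j}"
        proof -
          consider "card S = 0" | "card S = 1" | "card S = 2" using True cS by linarith
          then show thesis
          proof cases
            case 1 then have "S = {}" using fS by simp
            then show thesis using that[of 1 1] K by auto
          next
            case 2 then obtain a where "S = {a}" by (auto simp: card_1_singleton_iff)
            then show thesis using that[of a a] S by auto
          next
            case 3 then obtain a b where "S = {a,b}" by (auto simp: card_2_iff)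
            then show thesis using that[of a b] S by auto
          qed
        qed
        then show ?thesis using edge[OF l ij(1,2)] z by auto
      next
        case False
        obtain a where a: "a \<in> S" using False cS by fastforce
        have "card (S - {a}) \<ge> 2" using False cS a fS by simp
        then have "S - {a} \<noteq> {}" by (metis card.empty not_numeral_le_zero)
        then obtain b where b: "b \<in> S - {a}" by blast
        have "card (S - {a} - {b}) \<ge> 1" using False cS a b fS by (simp add: card_Diff_singleton)
        then have "S - {a} - {b} \<noteq> {}" by (metis card.empty not_one_le_zero)
        then obtain c where c: "c \<in> S - {a} - {b}" by blast
        have abc: "a\<in>S" "b\<in>S" "c\<in>S" "a\<noteq>b" "a\<noteq>c" "b\<noteq>c" using a b c by auto
        have abcK: "a\<in>{1..K}" "b\<in>{1..K}" "c\<in>{1..K}" using abc S by auto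
        have s3: "sum f {1..K} = sum f {a,b,c}" if "\<forall>k\<in>{1..K}-{a,b,c}. f k = 0" for f :: "nat \<Rightarrow> real"
          by (rule sum.mono_neutral_right) (use abcK that in auto)
        define d0 where "d0 = (if mu a = mu b then (\<lambda>k. if k = a then 1 else if k = b then -1 else 0)
           else (\<lambda>k. if k = a then mu b - mu c else if k = b then mu c - mu a else if k = c then mu a - mu b else (0::real)))"
        have d0z: "\<forall>k. k \<notin> {a,b,c} \<longrightarrow> d0 k = 0" unfolding d0_def by auto
        have d0s: "(\<Sum>k=1..K. d0 k) = 0"
          by (subst s3) (use d0z abc in \<open>auto simp: d0_def\<close>)
        have d0m: "lin K mu d0 = 0" unfolding lin_def
          by (subst s3) (use d0z abc in \<open>auto simp: d0_def algebra_simps\<close>)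
        have d0nz: "\<exists>k\<in>{a,b,c}. d0 k \<noteq> 0"
          by (cases "mu a = mu b") (use abc in \<open>auto simp: d0_def\<close>)
        define \<sigma> where "\<sigma> d = lin K kappa d - lin K mu l * lin K nu d" for d
        define d where "d = (if \<sigma> d0 \<ge> 0 then d0 else (\<lambda>k. - d0 k))"
        have dz: "\<forall>k. k \<notin> {a,b,c} \<longrightarrow> d k = 0" using d0z unfolding d_def by auto
        have ds: "(\<Sum>k=1..K. d k) = 0" using d0s unfolding d_def by (simp add: sum_negf)
        have dm: "lin K mu d = 0" using d0m unfolding d_def lin_def by (simp add: sum_negf)
        have dsig: "\<sigma> d \<ge> 0"
        proof (cases "\<sigma> d0 \<ge> 0")
          case True then show ?thesis unfolding d_def by simp
        next
          case False
          have "\<sigma> (\<lambda>k. - d0 k) = - \<sigma> d0" unfolding \<sigma>_def lin_def by (simp add: sum_negf)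
          then show ?thesis using False unfolding d_def by simp
        qed
        have dnz: "\<exists>k\<in>{a,b,c}. d k \<noteq> 0" using d0nz unfolding d_def by auto
        have neg: "\<exists>k\<in>{1..K}. d k < 0"
        proof (rule ccontr)
          assume "\<not> ?thesis"
          then have "\<forall>k\<in>{1..K}. 0 \<le> d k" by auto
          then have "\<forall>k\<in>{1..K}. d k = 0" using ds sum_nonneg_eq_0_iff[of "{1..K}" d] by auto
          then show False using dnz abcK by auto
        qed
        define N where "N = {k\<in>{1..K}. d k < 0}"
        have fN: "finite N" and neN: "N \<noteq> {}" using neg unfolding N_def by auto
        define s where "s = Min ((\<lambda>k. l k / (- d k)) ` N)"
        have "s \<in> (\<lambda>k. l k / (- d k)) ` N" unfolding s_def using fN neN by (intro Min_in) auto
        then obtain k0 where k0N: "k0 \<in> N" and k0s: "s = l k0 / (- d k0)" by blast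
        have sle: "s \<le> l k / (- d k)" if "k \<in> N" for k
          unfolding s_def using fN that by (auto intro: Min_le)
        have dk0: "d k0 < 0" "k0 \<in> {1..K}" using k0N unfolding N_def by auto
        have s0: "0 \<le> s"
        proof -
          have "0 \<le> l k0" using dk0 lnn by blast
          then show ?thesis unfolding k0s using dk0 by (intro divide_nonneg_pos) auto
        qed
        define l' where "l' = (\<lambda>k. l k + s * d k)"
        have l'nn: "\<forall>k\<in>{1..K}. 0 \<le> l' k"
        proof
          fix k assume k: "k \<in> {1..K}"
          show "0 \<le> l' k"
          proof (cases "d k < 0")
            case True
            then have "k \<in> N" using k unfolding N_def by auto
            then have "s \<le> l k / (- d k)" by (rule sle)
            then have "s * (- d k) \<le> l k" using True pos_le_divide_eq[of "- d k" s "l k"] by linarith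
            then show ?thesis unfolding l'_def by simp
          next
            case False
            then show ?thesis unfolding l'_def using lnn k s0 by simp
          qed
        qed
        have l'sum: "(\<Sum>k=1..K. l' k) = 1"
          unfolding l'_def using lsum ds by (simp add: sum.distrib sum_distrib_left[symmetric])
        have l'S: "l' \<in> simplexK K" using l'nn l'sum unfolding simplexK_def by auto
        have l'k0: "l' k0 = 0" unfolding l'_def k0s using dk0 by simp
        have k0S: "k0 \<in> S" using dz dk0 abc by fastforce
        have l'z: "\<forall>k\<in>{1..K}-(S-{k0}). l' k = 0"
        proof
          fix k assume k: "k \<in> {1..K}-(S-{k0})"
          show "l' k = 0"
          proof (cases "k = k0")
            case True then show ?thesis using l'k0 by simp
          next
            case False
            then have "k \<notin> S" using k by auto
            then have "l k = 0" "d k = 0" using z k dz abc by auto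
            then show ?thesis unfolding l'_def by simp
          qed
        qed
        have cl: "card (S - {k0}) < n" using cS k0S fS False by (simp add: card_Diff1_less)
        have "objK K mu nu kappa l' \<le> B"
          using less.IH[OF cl] S l'S l'z by blast
        moreover have "objK K mu nu kappa l' = objK K mu nu kappa l + s * \<sigma> d"
          unfolding objK_lin l'_def lin_add dm \<sigma>_def by (simp add: algebra_simps)
        moreover have "0 \<le> s * \<sigma> d" using s0 dsig by simp
        ultimately show ?thesis by linarith
      qed
    qed
  qed
  show ?thesis using main[rule_format, of "{1..K}" "card {1..K}" l0] l0 by auto
qed

lemma qfun_qr: "qfun mu nu kappa i j x = qr (mu i) (mu j) (nu i) (nu j) (kappa i) (kappa j) x"
  unfolding qfun_def qr_def by simp

lemma mutilde_mtr: "mutilde mu nu kappa i j = mtr (mu i) (mu j) (nu i) (nu j) (kappa i) (kappa j)"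
  unfolding mutilde_def mtr_def by simp

lemma gr_swap: "gr mi mj ni nj ki kj t = gr mj mi nj ni kj ki (1 - t)"
  unfolding gr_def by (simp add: algebra_simps)

lemma t_bounds:
  fixes ni nj x :: real
  assumes "ni \<noteq> nj" "min ni nj \<le> x" "x \<le> max ni nj"
  shows "0 \<le> (x - nj) / (ni - nj)" "(x - nj) / (ni - nj) \<le> 1"
    "(x - nj) / (ni - nj) * ni + (1 - (x - nj) / (ni - nj)) * nj = x"
proof -
  show "0 \<le> (x - nj) / (ni - nj)" using assms by (cases "ni < nj") (auto simp: zero_le_divide_iff min_def max_def)
  show "(x - nj) / (ni - nj) \<le> 1" using assms by (cases "ni < nj") (auto simp: divide_le_eq_1 min_def max_def)
  have "ni - nj \<noteq> 0" using assms by simp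
  then have e: "(x - nj) / (ni - nj) * (ni - nj) = x - nj" by simp
  have g: "t * ni + (1 - t) * nj = t * (ni - nj) + nj" for t :: real
    by (simp add: algebra_simps)
  show "(x - nj) / (ni - nj) * ni + (1 - (x - nj) / (ni - nj)) * nj = x" using e g[of "(x - nj) / (ni - nj)"] by simp
qed

lemma achieve:
  assumes i: "i \<in> {1..K}" and j: "j \<in> {1..K}"
  shows "\<exists>l\<in>simplexK K. objK K mu nu kappa l = qfun mu nu kappa i j (mutilde mu nu kappa i j)"
proof (cases "mu i \<noteq> mu j \<and> nu i \<noteq> nu j")
  case True
  define x where "x = mutilde mu nu kappa i j"
  have xb: "min (nu i) (nu j) \<le> x" "x \<le> max (nu i) (nu j)"
    unfolding x_def mutilde_def using True by auto
  define t where "t = (x - nu j) / (nu i - nu j)"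
  have tb: "0 \<le> t" "t \<le> 1" "t * nu i + (1 - t) * nu j = x"
    using t_bounds[OF _ xb] True unfolding t_def by auto
  have ij: "i \<noteq> j" using True by auto
  have "objK K mu nu kappa (\<lambda>k. if k = i then t else if k = j then 1 - t else 0)
       = gr (mu i) (mu j) (nu i) (nu j) (kappa i) (kappa j) t" by (rule edge_obj(2)[OF ij i j tb(1,2)])
  also have "\<dots> = qr (mu i) (mu j) (nu i) (nu j) (kappa i) (kappa j) (t * nu i + (1 - t) * nu j)"
    using L1 True by simp
  also have "\<dots> = qfun mu nu kappa i j (mutilde mu nu kappa i j)"
    unfolding tb(3) qfun_qr x_def ..
  finally show ?thesis using edge_obj(1)[OF ij i j tb(1,2)] by blast
next
  case False
  then have "qfun mu nu kappa i j (mutilde mu nu kappa i j) = kappa i - mu i * nu i"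
    unfolding qfun_def by auto
  then show ?thesis using vertex_obj[OF i] by metis
qed

lemma li0_lem: fixes u v D ni nj :: real assumes "u \<noteq> 0" "ni \<noteq> nj"
  shows "1/2 - D / (2 * u * (nj - ni)) = (D / (2 * u) + (ni + nj) / 2 - nj) / (ni - nj)"
proof -
  have a: "ni - nj \<noteq> 0" "nj - ni \<noteq> 0" using assms by auto
  have "(D / (2 * u) + (ni + nj) / 2 - nj) / (ni - nj) = (D / (2 * u)) / (ni - nj) + ((ni - nj) / 2) / (ni - nj)"
  proof -
    have "D / (2 * u) + (ni + nj) / 2 - nj = D / (2 * u) + (ni - nj) / 2" by (simp add: field_simps)
    then show ?thesis by (simp only: add_divide_distrib)
  qed
  also have "\<dots> = D / (2 * u * (ni - nj)) + 1/2" using a by simp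
  also have "D / (2 * u * (ni - nj)) = - (D / (2 * u * (nj - ni)))"
    by (metis minus_diff_eq minus_divide_right mult_minus_right)
  finally show ?thesis by simp
qed
theorem theorem5p3:
  fixes K :: nat and mu nu kappa :: "nat \<Rightarrow> real"
  assumes "K \<ge> 1"
  shows "VK K mu nu kappa =
           max (Max {kappa i - mu i * nu i | i. i \<in> {1..K}})
               (Max {qfun mu nu kappa i j (mutilde mu nu kappa i j) | i j. 1 \<le> i \<and> i \<le> j \<and> j \<le> K})
       \<and> ((\<exists>i0\<in>{1..K}. VK K mu nu kappa = kappa i0 - mu i0 * nu i0) \<longrightarrow>
            (\<forall>i0\<in>{1..K}. VK K mu nu kappa = kappa i0 - mu i0 * nu i0 \<longrightarrow>
               (\<lambda>j. if j = i0 then 1 else 0) \<in> simplexK K \<and>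
               objK K mu nu kappa (\<lambda>j. if j = i0 then 1 else 0) = VK K mu nu kappa))
       \<and> (\<not> (\<exists>i0\<in>{1..K}. VK K mu nu kappa = kappa i0 - mu i0 * nu i0) \<longrightarrow>
            (\<exists>i0 j0. 1 \<le> i0 \<and> i0 < j0 \<and> j0 \<le> K \<and>
               VK K mu nu kappa = qfun mu nu kappa i0 j0 (mutilde mu nu kappa i0 j0) \<and>
               (let li0 = 1/2 - (kappa j0 - mu j0 * nu j0 - kappa i0 + mu i0 * nu i0)
                                / (2 * (mu j0 - mu i0) * (nu j0 - nu i0));
                    l = (\<lambda>j. if j = i0 then li0 else if j = j0 then 1 - li0 else 0)
                in l \<in> simplexK K \<and> objK K mu nu kappa l = VK K mu nu kappa)))"
proof -
  define A where "A = {kappa i - mu i * nu i | i. i \<in> {1..K}}"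
  define B where "B = {qfun mu nu kappa i j (mutilde mu nu kappa i j) | i j. 1 \<le> i \<and> i \<le> j \<and> j \<le> K}"
  define Mx where "Mx = max (Max A) (Max B)"
  have A_eq: "A = (\<lambda>i. kappa i - mu i * nu i) ` {1..K}" unfolding A_def by auto
  have B_eq: "B = (\<lambda>(i,j). qfun mu nu kappa i j (mutilde mu nu kappa i j)) ` {(i,j). 1 \<le> i \<and> i \<le> j \<and> j \<le> K}"
    unfolding B_def by auto
  have fA: "finite A" "A \<noteq> {}" unfolding A_eq using assms by auto
  have "{(i,j). 1 \<le> i \<and> i \<le> j \<and> j \<le> K} \<subseteq> {1..K} \<times> {1..K}" by auto
  then have "finite {(i,j). 1 \<le> i \<and> i \<le> j \<and> j \<le> (K::nat)}" by (rule finite_subset) auto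
  moreover have "(1::nat,1::nat) \<in> {(i,j). 1 \<le> i \<and> i \<le> j \<and> j \<le> K}" using assms by auto
  ultimately have fB: "finite B" "B \<noteq> {}" unfolding B_eq by blast+
  have vA: "kappa i - mu i * nu i \<le> Mx" if "i \<in> {1..K}" for i
  proof -
    have "kappa i - mu i * nu i \<in> A" using that unfolding A_def by blast
    then have "kappa i - mu i * nu i \<le> Max A" using fA(1) by (rule Max_ge[rotated])
    then show ?thesis unfolding Mx_def by linarith
  qed
  have vB: "qfun mu nu kappa i j (mutilde mu nu kappa i j) \<le> Mx" if "1 \<le> i" "i \<le> j" "j \<le> K" for i j
  proof -
    have "qfun mu nu kappa i j (mutilde mu nu kappa i j) \<in> B" using that unfolding B_def by blast
    then have "qfun mu nu kappa i j (mutilde mu nu kappa i j) \<le> Max B" using fB(1) by (rule Max_ge[rotated])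
    then show ?thesis unfolding Mx_def by linarith
  qed
  have upper: "objK K mu nu kappa l \<le> Mx" if l: "l \<in> simplexK K" for l
  proof (rule reduce[OF assms _ l])
    fix l i j assume l: "l \<in> simplexK K" and i: "i \<in> {1..K}" and j: "j \<in> {1..K}"
      and z: "\<forall>k\<in>{1..K}. k \<noteq> i \<and> k \<noteq> j \<longrightarrow> l k = 0"
    have lnn: "\<forall>k\<in>{1..K}. 0 \<le> l k" and lsum: "(\<Sum>k=1..K. l k) = 1"
      using l unfolding simplexK_def by auto
    have s: "sum f {1..K} = sum f {i,j}" if "\<forall>k\<in>{1..K}-{i,j}. f k = 0" for f :: "nat \<Rightarrow> real"
      by (rule sum.mono_neutral_right) (use i j that in auto)
    have L: "lin K c l = sum (\<lambda>k. l k * c k) {i,j}" for c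
      unfolding lin_def by (rule s) (use z in auto)
    have S: "sum l {i,j} = 1" using lsum s z by auto
    show "objK K mu nu kappa l \<le> Mx"
    proof (cases "i = j")
      case True
      then have "l i = 1" using S by simp
      then have "objK K mu nu kappa l = kappa i - mu i * nu i"
        unfolding objK_lin L using True by simp
      then show ?thesis using vA[OF i] by simp
    next
      case False
      define t where "t = l i"
      have lj: "l j = 1 - t" using S False unfolding t_def by simp
      have "0 \<le> l i" "0 \<le> l j" using lnn i j by auto
      then have tb: "0 \<le> t" "t \<le> 1" using lj unfolding t_def by auto
      have ob: "objK K mu nu kappa l = gr (mu i) (mu j) (nu i) (nu j) (kappa i) (kappa j) t"
      proof -
        have L2: "lin K c l = t * c i + (1 - t) * c j" for c
          unfolding L using False lj unfolding t_def by simp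
        show ?thesis unfolding objK_lin L2 gr_def by (simp add: algebra_simps)
      qed
      show ?thesis
      proof (cases "i < j")
        case True
        have "gr (mu i) (mu j) (nu i) (nu j) (kappa i) (kappa j) t \<le>
          max (max (kappa i - mu i * nu i) (kappa j - mu j * nu j)) (qfun mu nu kappa i j (mutilde mu nu kappa i j))"
          using oneD[OF tb] unfolding qfun_qr mutilde_mtr by simp
        then show ?thesis using vA[OF i] vA[OF j] vB[of i j] True i j ob by auto
      next
        case False
        then have ji: "j < i" using \<open>i \<noteq> j\<close> by simp
        have tb': "0 \<le> 1 - t" "1 - t \<le> 1" using tb by auto
        have "gr (mu j) (mu i) (nu j) (nu i) (kappa j) (kappa i) (1 - t) \<le>
          max (max (kappa j - mu j * nu j) (kappa i - mu i * nu i)) (qfun mu nu kappa j i (mutilde mu nu kappa j i))"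
          using oneD[OF tb'] unfolding qfun_qr mutilde_mtr by simp
        moreover have "gr (mu i) (mu j) (nu i) (nu j) (kappa i) (kappa j) t = gr (mu j) (mu i) (nu j) (nu i) (kappa j) (kappa i) (1 - t)"
          by (rule gr_swap)
        ultimately show ?thesis using vA[OF i] vA[OF j] vB[of j i] ji i j ob by auto
      qed
    qed
  qed
  have MxA: "Mx \<in> objK K mu nu kappa ` simplexK K"
  proof (cases "Max B \<le> Max A")
    case True
    then have "Mx = Max A" unfolding Mx_def by simp
    then have "Mx \<in> A" using Max_in[OF fA] by simp
    then obtain i where i: "i \<in> {1..K}" "Mx = kappa i - mu i * nu i" unfolding A_def by blast
    have "Mx = objK K mu nu kappa (\<lambda>k. if k = i then 1 else 0)" using vertex_obj(2)[OF i(1), of mu nu kappa] i(2) by simp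
    then show ?thesis using vertex_obj(1)[OF i(1)] by blast
  next
    case False
    then have "Mx = Max B" unfolding Mx_def by simp
    then have "Mx \<in> B" using Max_in[OF fB] by simp
    then obtain i j where ij: "1 \<le> i" "i \<le> j" "j \<le> K" "Mx = qfun mu nu kappa i j (mutilde mu nu kappa i j)"
      unfolding B_def by blast
    have "i \<in> {1..K}" "j \<in> {1..K}" using ij by auto
    then show ?thesis using achieve[of i K j mu nu kappa] ij(4) by force
  qed
  have VK: "VK K mu nu kappa = Mx"
    unfolding VK_def using MxA upper by (intro cSup_eq_maximum) auto
  have P1: "VK K mu nu kappa = max (Max {kappa i - mu i * nu i | i. i \<in> {1..K}})
               (Max {qfun mu nu kappa i j (mutilde mu nu kappa i j) | i j. 1 \<le> i \<and> i \<le> j \<and> j \<le> K})"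
    unfolding VK Mx_def A_def B_def ..
  have P2: "(\<forall>i0\<in>{1..K}. VK K mu nu kappa = kappa i0 - mu i0 * nu i0 \<longrightarrow>
               (\<lambda>j. if j = i0 then 1 else 0) \<in> simplexK K \<and>
               objK K mu nu kappa (\<lambda>j. if j = i0 then 1 else 0) = VK K mu nu kappa)"
  proof (intro ballI impI)
    fix i0 assume i0: "i0 \<in> {1..K}" and e: "VK K mu nu kappa = kappa i0 - mu i0 * nu i0"
    show "(\<lambda>j. if j = i0 then 1 else 0) \<in> simplexK K \<and>
               objK K mu nu kappa (\<lambda>j. if j = i0 then 1 else 0) = VK K mu nu kappa"
      using vertex_obj(1)[OF i0] vertex_obj(2)[OF i0, of mu nu kappa] e by simp
  qed
  have P3: "\<exists>i0 j0. 1 \<le> i0 \<and> i0 < j0 \<and> j0 \<le> K \<and>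
               VK K mu nu kappa = qfun mu nu kappa i0 j0 (mutilde mu nu kappa i0 j0) \<and>
               (let li0 = 1/2 - (kappa j0 - mu j0 * nu j0 - kappa i0 + mu i0 * nu i0)
                                / (2 * (mu j0 - mu i0) * (nu j0 - nu i0));
                    l = (\<lambda>j. if j = i0 then li0 else if j = j0 then 1 - li0 else 0)
                in l \<in> simplexK K \<and> objK K mu nu kappa l = VK K mu nu kappa)"
    if nv: "\<not> (\<exists>i0\<in>{1..K}. VK K mu nu kappa = kappa i0 - mu i0 * nu i0)"
  proof -
    have "Mx \<notin> A" using nv unfolding VK A_def by blast
    moreover have "Mx = Max A \<or> Mx = Max B" unfolding Mx_def by linarith
    ultimately have "Mx \<in> B" using Max_in[OF fA] Max_in[OF fB] by auto
    then obtain i j where ij: "1 \<le> i" "i \<le> j" "j \<le> K" and Mq: "Mx = qfun mu nu kappa i j (mutilde mu nu kappa i j)"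
      unfolding B_def by blast
    have iK: "i \<in> {1..K}" and jK: "j \<in> {1..K}" using ij by auto
    have nd: "mu i \<noteq> mu j" "nu i \<noteq> nu j"
    proof -
      have "mu i \<noteq> mu j \<and> nu i \<noteq> nu j"
      proof (rule ccontr)
        assume "\<not> ?thesis"
        then have "Mx = kappa i - mu i * nu i" unfolding Mq qfun_def by auto
        then show False using nv iK unfolding VK by blast
      qed
      then show "mu i \<noteq> mu j" "nu i \<noteq> nu j" by auto
    qed
    have ilj: "i < j" using ij nd by (cases "i = j") auto
    define D where "D = kappa j - mu j * nu j - kappa i + mu i * nu i"
    define xs where "xs = D / (2 * (mu j - mu i)) + (nu i + nu j) / 2"
    have mt: "mutilde mu nu kappa i j = min (max xs (min (nu i) (nu j))) (max (nu i) (nu j))"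
      unfolding mutilde_def xs_def D_def using nd by simp
    have qi: "qfun mu nu kappa i j (nu i) = kappa i - mu i * nu i"
      unfolding qfun_qr using L3(1) nd by simp
    have qj: "qfun mu nu kappa i j (nu j) = kappa j - mu j * nu j"
      unfolding qfun_qr using L3(2) nd by simp
    have notv: "Mx \<noteq> kappa k - mu k * nu k" if "k \<in> {1..K}" for k
      using nv that unfolding VK by blast
    have xlo: "min (nu i) (nu j) \<le> xs"
    proof (rule ccontr)
      assume "\<not> ?thesis"
      then have "mutilde mu nu kappa i j = min (nu i) (nu j)" unfolding mt by auto
      then have "mutilde mu nu kappa i j = nu i \<or> mutilde mu nu kappa i j = nu j" by (auto simp: min_def)
      then show False using Mq qi qj notv[OF iK] notv[OF jK] by auto
    qed
    have xhi: "xs \<le> max (nu i) (nu j)"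
    proof (rule ccontr)
      assume "\<not> ?thesis"
      then have "mutilde mu nu kappa i j = max (nu i) (nu j)" unfolding mt using xlo by auto
      then have "mutilde mu nu kappa i j = nu i \<or> mutilde mu nu kappa i j = nu j" by (auto simp: max_def)
      then show False using Mq qi qj notv[OF iK] notv[OF jK] by auto
    qed
    have mtx: "mutilde mu nu kappa i j = xs" unfolding mt using xlo xhi by auto
    define li0 where "li0 = 1/2 - D / (2 * (mu j - mu i) * (nu j - nu i))"
    have li0eq: "li0 = (xs - nu j) / (nu i - nu j)"
    proof -
      have "mu j - mu i \<noteq> 0" using nd by auto
      then show ?thesis unfolding li0_def xs_def by (rule li0_lem[OF _ nd(2)])
    qed
    have tb: "0 \<le> li0" "li0 \<le> 1" "li0 * nu i + (1 - li0) * nu j = xs"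
      using t_bounds[OF nd(2) xlo xhi] unfolding li0eq by auto
    have ineqj: "i \<noteq> j" using ilj by simp
    let ?l = "\<lambda>k. if k = i then li0 else if k = j then 1 - li0 else 0"
    have lS: "?l \<in> simplexK K" by (rule edge_obj(1)[OF ineqj iK jK tb(1,2)])
    have "objK K mu nu kappa ?l = gr (mu i) (mu j) (nu i) (nu j) (kappa i) (kappa j) li0"
      by (rule edge_obj(2)[OF ineqj iK jK tb(1,2)])
    also have "\<dots> = qr (mu i) (mu j) (nu i) (nu j) (kappa i) (kappa j) (li0 * nu i + (1 - li0) * nu j)"
      using L1 nd by simp
    also have "\<dots> = VK K mu nu kappa"
      unfolding tb(3) VK Mq qfun_qr mtx ..
    finally have ob: "objK K mu nu kappa ?l = VK K mu nu kappa" .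
    have V: "VK K mu nu kappa = qfun mu nu kappa i j (mutilde mu nu kappa i j)" using VK Mq by simp
    have "1 \<le> i \<and> i < j \<and> j \<le> K \<and>
               VK K mu nu kappa = qfun mu nu kappa i j (mutilde mu nu kappa i j) \<and>
               (let li0 = 1/2 - (kappa j - mu j * nu j - kappa i + mu i * nu i)
                                / (2 * (mu j - mu i) * (nu j - nu i));
                    l = (\<lambda>k. if k = i then li0 else if k = j then 1 - li0 else 0)
                in l \<in> simplexK K \<and> objK K mu nu kappa l = VK K mu nu kappa)"
      unfolding Let_def D_def[symmetric] li0_def[symmetric] using ij ilj V lS ob by blast
    then show ?thesis by blast
  qed
  show ?thesis using P1 P2 P3 by blast
qed
end
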